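(* Consider binary classification with $\ell_1$ loss: $y:\mathcal{X}\to[0,1]$, every $h\in\mathcal{H}$ takes values in $\{0,1\}$, and $l(a,b)=|a-b|$. Let $p_s$ be a probability distribution on $\mathcal{X}$, let $h_p^*\in\arg\min_{h\in\mathcal{H}}\mathcal{L}_p(h)$, and let $\{(h_k,w_k)\}_{k=1}^K$ (with $h_k\in\mathcal{H}$, $w_k:\mathcal{X}\to[0,1]$ measurable, $\sum_k w_k(x)=1$) be an optimal model ensemble. Then for every $h\in\mathcal{H}$, $$\mathcal{L}_p(h_p^* )\le\mathcal{L}_p(h)\le\mathcal{L}_p(h_p^* )+\mathcal{L}_{p_s}\Big(h,\sum_{k=1}^K w_k\cdot h_k\Big)+\tfrac12\,d_{\bar{\mathcal{H}}\triangle\bar{\mathcal{H}}}(p,p_s).$$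
   Context: $\mathcal{X}$ is a measurable space with fixed measurable labeling function $y$. For a distribution $q$ on $\mathcal{X}$ and measurable real functions $g,g'$: $\mathcal{L}_q(g)=\mathbf{E}_{x\sim q}[|g(x)-y(x)|]$ and $\mathcal{L}_q(g,g')=\mathbf{E}_{x\sim q}[|g(x)-g'(x)|]$. There are $K$ clients with distributions $p_k$ on $\mathcal{X}$ and positive integers $n_k$; $\pi_k=n_k/\sum_j n_j$, $p=\sum_k\pi_k p_k$. The ensemble $\sum_k w_k\cdot h_k$ is $x\mapsto\sum_k w_k(x)h_k(x)$; it is an optimal model ensemble if $\mathcal{L}_p(\sum_k w_k\cdot h_k)\le\min_{h\in\mathcal{H}}\mathcal{L}_p(h)$. The spanned class is $\bar{\mathcal{H}}=\{\sum_{k=1}^K w_k\cdot h_k:\ h_k\in\mathcal{H},\ w_k:\mathcal{X}\to[0,1]\text{ measurable},\ \sum_k w_k(x)=1\ \forall x\}$, and $d_{\bar{\mathcal{H}}\triangle\bar{\mathcal{H}}}(q,q')=2\sup_{g,g'\in\bar{\mathcal{H}}}|\mathcal{L}_q(g,g')-\mathcal{L}_{q'}(g,g')|$. *)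

theory Defs
  imports "HOL-Probability.Probability"
begin

definition loss :: "'a measure \<Rightarrow> ('a \<Rightarrow> real) \<Rightarrow> ('a \<Rightarrow> real) \<Rightarrow> real" where
  "loss q y g = (\<integral>x. \<bar>g x - y x\<bar> \<partial>q)"

definition disc :: "'a measure \<Rightarrow> ('a \<Rightarrow> real) \<Rightarrow> ('a \<Rightarrow> real) \<Rightarrow> real" where
  "disc q g g' = (\<integral>x. \<bar>g x - g' x\<bar> \<partial>q)"

definition ensemble :: "nat \<Rightarrow> (nat \<Rightarrow> 'a \<Rightarrow> real) \<Rightarrow> (nat \<Rightarrow> 'a \<Rightarrow> real) \<Rightarrow> 'a \<Rightarrow> real" where
  "ensemble K w h = (\<lambda>x. \<Sum>k<K. w k x * h k x)"

definition mixture :: "'a measure \<Rightarrow> nat \<Rightarrow> (nat \<Rightarrow> nat) \<Rightarrow> (nat \<Rightarrow> 'a measure) \<Rightarrow> 'a measure" where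
  "mixture M K n P = measure_of (space M) (sets M)
     (\<lambda>A. \<Sum>k<K. ennreal (real (n k) / real (\<Sum>j<K. n j)) * emeasure (P k) A)"

definition spanned :: "'a measure \<Rightarrow> nat \<Rightarrow> ('a \<Rightarrow> real) set \<Rightarrow> ('a \<Rightarrow> real) set" where
  "spanned M K H = {ensemble K w h | w h.
      (\<forall>k<K. h k \<in> H) \<and>
      (\<forall>k<K. w k \<in> borel_measurable M \<and> (\<forall>x. w k x \<in> {0..1})) \<and>
      (\<forall>x. (\<Sum>k<K. w k x) = 1)}"

definition dHH :: "'a measure \<Rightarrow> nat \<Rightarrow> ('a \<Rightarrow> real) set \<Rightarrow> 'a measure \<Rightarrow> 'a measure \<Rightarrow> real" where
  "dHH M K H q q' = 2 * (SUP gg \<in> spanned M K H \<times> spanned M K H.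
      \<bar>disc q (fst gg) (snd gg) - disc q' (fst gg) (snd gg)\<bar>)"

end

theory Submission
  imports Defs
begin

lemma mixture_prob:
  assumes K_pos: "K > 0"
    and n_pos: "\<forall>k<K. n k > 0"
    and P_prob: "\<forall>k<K. prob_space (P k) \<and> sets (P k) = sets M"
  shows "prob_space (mixture M K n P) \<and> sets (mixture M K n P) = sets M"
proof -
  let ?mu = "\<lambda>A. \<Sum>k<K. ennreal (real (n k) / real (\<Sum>j<K. n j)) * emeasure (P k) A"
  have sa: "sigma_algebra (space M) (sets M)" by (rule sets.sigma_algebra_axioms)
  have sets_eq: "sets (mixture M K n P) = sets M"
    unfolding mixture_def by (simp add: sets.space_closed)
  have space_eq: "space (mixture M K n P) = space M"
    unfolding mixture_def by (simp add: sets.space_closed)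
  have pos: "positive (sets M) ?mu"
    unfolding positive_def using P_prob by (auto intro!: sum.neutral)
  have ca: "countably_additive (sets M) ?mu"
    unfolding countably_additive_def
  proof (intro allI impI)
    fix A :: "nat \<Rightarrow> _" assume A: "range A \<subseteq> sets M" "disjoint_family A"
      "\<Union> (range A) \<in> sets M"
    have "(\<Sum>i. ?mu (A i)) = (\<Sum>k<K. \<Sum>i. ennreal (real (n k) / real (\<Sum>j<K. n j)) * emeasure (P k) (A i))"
      by (rule suminf_sum) (rule summableI)
    also have "\<dots> = ?mu (\<Union> (range A))"
    proof (rule sum.cong[OF refl])
      fix k assume k: "k \<in> {..<K}"
      then have sk: "sets (P k) = sets M" using P_prob by auto
      have "(\<Sum>i. emeasure (P k) (A i)) = emeasure (P k) (\<Union> (range A))"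
        using A sk by (intro suminf_emeasure) auto
      then show "(\<Sum>i. ennreal (real (n k) / real (\<Sum>j<K. n j)) * emeasure (P k) (A i)) =
         ennreal (real (n k) / real (\<Sum>j<K. n j)) * emeasure (P k) (\<Union> (range A))"
        by simp
    qed
    finally show "(\<Sum>i. ?mu (A i)) = ?mu (\<Union> (range A))" .
  qed
  have em: "emeasure (mixture M K n P) (space M) = ?mu (space M)"
    unfolding mixture_def by (rule emeasure_measure_of_sigma[OF sa pos ca]) simp
  have "?mu (space M) = (\<Sum>k<K. ennreal (real (n k) / real (\<Sum>j<K. n j)))"
  proof (rule sum.cong[OF refl])
    fix k assume "k \<in> {..<K}"
    then have "prob_space (P k)" "sets (P k) = sets M" using P_prob by auto
    then have "emeasure (P k) (space M) = 1"
      by (metis prob_space.emeasure_space_1 sets_eq_imp_space_eq)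
    then show "ennreal (real (n k) / real (\<Sum>j<K. n j)) * emeasure (P k) (space M) =
      ennreal (real (n k) / real (\<Sum>j<K. n j))" by simp
  qed
  also have "\<dots> = ennreal (\<Sum>k<K. real (n k) / real (\<Sum>j<K. n j))"
    by (intro sum_ennreal) (auto intro!: divide_nonneg_nonneg sum_nonneg)
  also have "(\<Sum>k<K. real (n k) / real (\<Sum>j<K. n j)) = 1"
  proof -
    have "0 < n 0" using n_pos K_pos by auto
    moreover have "n 0 \<le> (\<Sum>j<K. n j)" using K_pos
      by (intro member_le_sum) auto
    ultimately have "(\<Sum>j<K. n j) \<noteq> 0" by linarith
    then have nz: "(\<Sum>j<K. real (n j)) \<noteq> 0" by (metis of_nat_sum of_nat_eq_0_iff)
    have "(\<Sum>k<K. real (n k) / real (\<Sum>j<K. n j)) = (\<Sum>k<K. real (n k)) / (\<Sum>j<K. real (n j))"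
      by (simp add: sum_divide_distrib[symmetric])
    then show ?thesis using nz by simp
  qed
  finally have "emeasure (mixture M K n P) (space (mixture M K n P)) = 1"
    using em space_eq by simp
  then show ?thesis using sets_eq by (simp add: prob_spaceI)
qed

lemma int_bounded:
  fixes f :: "'a \<Rightarrow> real"
  assumes "prob_space q" "sets q = sets M" "f \<in> borel_measurable M" "\<forall>x. \<bar>f x\<bar> \<le> 1"
  shows "integrable q f"
proof -
  have fm: "f \<in> borel_measurable q" using assms(3) measurable_cong_sets[OF assms(2) refl, of borel] by blast
  interpret prob_space q by fact
  have ae: "AE x in q. norm (f x) \<le> 1" using assms(4) by (intro AE_I2) simp
  show ?thesis by (rule integrable_const_bound[OF ae fm])
qed

lemma int_le1:
  fixes f :: "'a \<Rightarrow> real"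
  assumes "prob_space q" "sets q = sets M" "f \<in> borel_measurable M" "\<forall>x. f x \<in> {0..1}"
  shows "integral\<^sup>L q f \<in> {0..1}"
proof -
  have b: "\<forall>x. \<bar>f x\<bar> \<le> 1" using assms(4) by simp
  have i: "integrable q f" by (rule int_bounded[OF assms(1,2,3) b])
  interpret prob_space q by fact
  have "integral\<^sup>L q f \<le> integral\<^sup>L q (\<lambda>x. 1)"
    using assms(4) by (intro integral_mono[OF i]) auto
  moreover have "0 \<le> integral\<^sup>L q f" using assms(4) by (intro Bochner_Integration.integral_nonneg) auto
  ultimately show ?thesis by (simp add: prob_space)
qed

lemma ens_props:
  assumes H_meas: "\<forall>h\<in>H. h \<in> borel_measurable M"
    and H_bin: "\<forall>h\<in>H. \<forall>x. h x \<in> {0, 1}"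
    and hs_in: "\<forall>k<K. hs k \<in> H"
    and w_meas: "\<forall>k<K. w k \<in> borel_measurable M"
    and w_range: "\<forall>k<K. \<forall>x. w k x \<in> {0..1}"
    and w_sum: "\<forall>x. (\<Sum>k<K. w k x) = 1"
  shows "ensemble K w hs \<in> borel_measurable M \<and> (\<forall>x. ensemble K w hs x \<in> {0..1})"
proof
  show "ensemble K w hs \<in> borel_measurable M"
    unfolding ensemble_def using hs_in H_meas w_meas by (intro borel_measurable_sum borel_measurable_times) auto
  show "\<forall>x. ensemble K w hs x \<in> {0..1}"
  proof
    fix x
    have a: "\<forall>k<K. 0 \<le> w k x * hs k x \<and> w k x * hs k x \<le> w k x"
    proof (intro allI impI)
      fix k assume "k < K"
      then have "w k x \<in> {0..1}" "hs k x \<in> {0,1}" using w_range H_bin hs_in by auto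
      then show "0 \<le> w k x * hs k x \<and> w k x * hs k x \<le> w k x" by auto
    qed
    have "0 \<le> (\<Sum>k<K. w k x * hs k x)" using a by (intro sum_nonneg) auto
    moreover have "(\<Sum>k<K. w k x * hs k x) \<le> (\<Sum>k<K. w k x)" using a by (intro sum_mono) auto
    ultimately show "ensemble K w hs x \<in> {0..1}" using w_sum unfolding ensemble_def by simp
  qed
qed

lemma spanned_props:
  assumes H_meas: "\<forall>h\<in>H. h \<in> borel_measurable M"
    and H_bin: "\<forall>h\<in>H. \<forall>x. h x \<in> {0, 1}"
    and g: "g \<in> spanned M K H"
  shows "g \<in> borel_measurable M \<and> (\<forall>x. g x \<in> {0..1})"
  using g ens_props[OF H_meas H_bin] unfolding spanned_def by blast

lemma in_spanned:
  assumes "K > 0" "h \<in> H"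
  shows "h \<in> spanned M K H"
proof -
  let ?w = "\<lambda>k (x::'a). if k = 0 then (1::real) else 0"
  have e: "ensemble K ?w (\<lambda>k. h) = h"
    proof
    fix x
    have "(\<Sum>k<K. ?w k x * h x) = (\<Sum>k<K. if k = 0 then h x else 0)"
      by (rule sum.cong) auto
    also have "\<dots> = h x" using assms(1) by (simp add: sum.delta')
    finally show "ensemble K ?w (\<lambda>k. h) x = h x" unfolding ensemble_def .
  qed
  have s: "\<forall>x. (\<Sum>k<K. ?w k x) = 1" using assms(1) by (simp add: sum.delta')
  show ?thesis unfolding spanned_def
    apply (rule CollectI, rule exI[of _ ?w], rule exI[of _ "\<lambda>k. h"])
    using e s assms by auto
qed

lemma absdiff: "(a::real) \<in> {0..1} \<Longrightarrow> b \<in> {0..1} \<Longrightarrow> \<bar>a - b\<bar> \<le> 1" by auto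

lemma absdiff2: "(a::real) \<in> {0..1} \<Longrightarrow> b \<in> {0..1} \<Longrightarrow> \<bar>a - b\<bar> \<in> {0..1}" by auto

theorem corollary1:
  fixes M :: "'a measure" and y :: "'a \<Rightarrow> real" and H :: "('a \<Rightarrow> real) set"
    and K :: nat and n :: "nat \<Rightarrow> nat" and P :: "nat \<Rightarrow> 'a measure"
    and ps :: "'a measure" and hstar :: "'a \<Rightarrow> real"
    and hs :: "nat \<Rightarrow> 'a \<Rightarrow> real" and w :: "nat \<Rightarrow> 'a \<Rightarrow> real"
  assumes K_pos: "K > 0"
    and n_pos: "\<forall>k<K. n k > 0"
    and P_prob: "\<forall>k<K. prob_space (P k) \<and> sets (P k) = sets M"
    and ps_prob: "prob_space ps" and ps_sets: "sets ps = sets M"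
    and y_meas: "y \<in> borel_measurable M" and y_range: "\<forall>x. y x \<in> {0..1}"
    and H_meas: "\<forall>h\<in>H. h \<in> borel_measurable M"
    and H_bin: "\<forall>h\<in>H. \<forall>x. h x \<in> {0, 1}"
    and hstar_in: "hstar \<in> H"
    and hstar_min: "\<forall>h\<in>H. loss (mixture M K n P) y hstar \<le> loss (mixture M K n P) y h"
    and hs_in: "\<forall>k<K. hs k \<in> H"
    and w_meas: "\<forall>k<K. w k \<in> borel_measurable M"
    and w_range: "\<forall>k<K. \<forall>x. w k x \<in> {0..1}"
    and w_sum: "\<forall>x. (\<Sum>k<K. w k x) = 1"
    and opt: "loss (mixture M K n P) y (ensemble K w hs) \<le> (INF h\<in>H. loss (mixture M K n P) y h)"
  shows "\<forall>h\<in>H. loss (mixture M K n P) y hstar \<le> loss (mixture M K n P) y h \<and>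
           loss (mixture M K n P) y h \<le> loss (mixture M K n P) y hstar
             + disc ps h (ensemble K w hs) + dHH M K H (mixture M K n P) ps / 2"
  proof
  fix h assume hH: "h \<in> H"
  define p where "p = mixture M K n P"
  define g where "g = ensemble K w hs"
  have pp: "prob_space p" and ps': "sets p = sets M"
    using mixture_prob[OF K_pos n_pos P_prob] unfolding p_def by auto
  have gp: "g \<in> borel_measurable M" "\<forall>x. g x \<in> {0..1}"
    using ens_props[OF H_meas H_bin hs_in w_meas w_range w_sum] unfolding g_def by auto
  have hm1: "h \<in> borel_measurable M" using hH H_meas by blast
  have hm2: "\<forall>x. h x \<in> {0..1}"
  proof
    fix x have "h x \<in> {0,1}" using hH H_bin by blast
    then show "h x \<in> {0..1}" by auto
  qed
  note hm = hm1 hm2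
  have i1: "integrable p (\<lambda>x. \<bar>h x - y x\<bar>)"
    using hm y_meas y_range by (intro int_bounded[OF pp ps'] allI absdiff borel_measurable_abs borel_measurable_diff) (auto intro!: absdiff)
  have i2: "integrable p (\<lambda>x. \<bar>g x - y x\<bar>)"
    using gp y_meas y_range by (intro int_bounded[OF pp ps'] allI absdiff borel_measurable_abs borel_measurable_diff) (auto intro!: absdiff)
  have i3: "integrable p (\<lambda>x. \<bar>h x - g x\<bar>)"
    using gp hm by (intro int_bounded[OF pp ps'] allI absdiff borel_measurable_abs borel_measurable_diff) (auto intro!: absdiff)
  have "loss p y h \<le> integral\<^sup>L p (\<lambda>x. \<bar>g x - y x\<bar> + \<bar>h x - g x\<bar>)"
  proof -
    have i4: "integrable p (\<lambda>x. \<bar>g x - y x\<bar> + \<bar>h x - g x\<bar>)"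
      using i2 i3 by (rule Bochner_Integration.integrable_add)
    show ?thesis unfolding loss_def by (rule integral_mono[OF i1 i4]) arith
  qed
  also have "\<dots> = loss p y g + disc p h g"
    unfolding loss_def disc_def by (rule Bochner_Integration.integral_add[OF i2 i3])
  finally have A: "loss p y h \<le> loss p y g + disc p h g" .
  have lnn: "\<And>f. 0 \<le> loss p y f" unfolding loss_def by (intro Bochner_Integration.integral_nonneg) auto
  have "loss p y g \<le> (INF h\<in>H. loss p y h)" using opt unfolding p_def g_def .
  also have "\<dots> \<le> loss p y hstar"
    by (rule cINF_lower[OF _ hstar_in]) (auto intro: bdd_belowI2 lnn)
  finally have B: "loss p y g \<le> loss p y hstar" .
  let ?S = "SUP gg \<in> spanned M K H \<times> spanned M K H.
      \<bar>disc p (fst gg) (snd gg) - disc ps (fst gg) (snd gg)\<bar>"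
  have bd: "\<bar>disc p (fst gg) (snd gg) - disc ps (fst gg) (snd gg)\<bar> \<le> 1"
    if "gg \<in> spanned M K H \<times> spanned M K H" for gg
  proof -
    have a: "fst gg \<in> borel_measurable M \<and> (\<forall>x. fst gg x \<in> {0..1})"
      "snd gg \<in> borel_measurable M \<and> (\<forall>x. snd gg x \<in> {0..1})"
      using that spanned_props[OF H_meas H_bin] by auto
    have "disc p (fst gg) (snd gg) \<in> {0..1}" unfolding disc_def
      using a by (intro int_le1[OF pp ps'] allI absdiff2 borel_measurable_abs borel_measurable_diff) auto
    moreover have "disc ps (fst gg) (snd gg) \<in> {0..1}" unfolding disc_def
      using a by (intro int_le1[OF ps_prob ps_sets] allI absdiff2 borel_measurable_abs borel_measurable_diff) auto
    ultimately show ?thesis by auto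
  qed
  have mem: "(h, g) \<in> spanned M K H \<times> spanned M K H"
  proof -
    have "g \<in> spanned M K H" unfolding g_def spanned_def
      apply (rule CollectI, rule exI[of _ w], rule exI[of _ hs])
      using hs_in w_meas w_range w_sum by simp
    then show ?thesis using in_spanned[OF K_pos hH] by blast
  qed
  have bda: "bdd_above ((\<lambda>gg. \<bar>disc p (fst gg) (snd gg) - disc ps (fst gg) (snd gg)\<bar>) ` (spanned M K H \<times> spanned M K H))"
    by (rule bdd_aboveI2[OF bd])
  have "\<bar>disc p h g - disc ps h g\<bar> \<le> ?S"
    using cSUP_upper[OF mem bda] by simp
  then have C: "disc p h g \<le> disc ps h g + dHH M K H p ps / 2"
    unfolding dHH_def by linarith
  show "loss (mixture M K n P) y hstar \<le> loss (mixture M K n P) y h \<and>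
           loss (mixture M K n P) y h \<le> loss (mixture M K n P) y hstar
             + disc ps h (ensemble K w hs) + dHH M K H (mixture M K n P) ps / 2"
  proof -
    have D: "loss p y hstar \<le> loss p y h" using hstar_min hH unfolding p_def by blast
    show ?thesis unfolding p_def[symmetric] g_def[symmetric]
      using A B C D by (intro conjI) linarith+
  qed
qed


end
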